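(* Let $M$ be a separable finite MDP with $p_{\mathrm{maj}},p_{\mathrm{min}}>0$ and agent rewards $\rho$. Consider the linear program (LP) in variables $\lambda\in\mathbb{R}^{S\times A}$, $c\in\mathbb{R}$: maximize $(1-\gamma)^{-1}\sum_{s\in S}\sum_{a\in A}\lambda_{s,a}R_{s,a}$ subject to $\lambda_{s,a}\ge0$ for all $s,a$; $\sum_{a}\lambda_{s',a}=(1-\gamma)D_{s'}+\gamma\sum_{s}\sum_{a}\lambda_{s,a}P_{s,a,s'}$ for all $s'\in S$; $p_z^{-1}\sum_{\tilde s\in\tilde S}\sum_{a\in A}\lambda_{(z,\tilde s),a}\rho_{(z,\tilde s),a}=c$ for all $z\in Z$. Given an optimal solution $(\lambda^*,c^* )$, define $\pi^*_{s,a}=\lambda^*_{s,a}/\sum_{a'}\lambda^*_{s,a'}$ whenever $\sum_{a'}\lambda^*_{s,a'}>0$, and let $\pi^*_{s,\cdot}$ be an arbitrary probability distribution on $A$ otherwise. Then the LP is feasible if and only if $\Pi_{\mathrm{DP}}\neq\varnothing$; and in that case the LP has an optimal solution, and for every optimal solution $(\lambda^*,c^* )$ the policy $\pi^*$ is an optimal solution of problem (P), with $R^{(\pi^* )}$ equal to the optimal value of the LP.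
   Context: A finite MDP is $M=(S,A,D,P,R,\gamma)$ where $S,A$ are finite nonempty sets, $D$ is a probability distribution on $S$, $P_{s,a,s'}\ge 0$ with $\sum_{s'}P_{s,a,s'}=1$ for all $s,a$, $R\in\mathbb{R}^{S\times A}$, and $\gamma\in(0,1)$. A policy is $\pi\in\mathbb{R}^{S\times A}$ with $\pi_{s,a}\ge0$ and $\sum_a\pi_{s,a}=1$. Let $P^{(\pi)}_{s,s'}=\sum_a\pi_{s,a}P_{s,a,s'}$. For a distribution $\mu$ on $S$ set $\mu^{(\pi,0)}=\mu$, $\mu^{(\pi,t)}_{s'}=\sum_s\mu^{(\pi,t-1)}_sP^{(\pi)}_{s,s'}$, and $\mu^{(\pi)}=(1-\gamma)\sum_{t\ge0}\gamma^t\mu^{(\pi,t)}$. Write $D^{(\pi)}$ for $\mu=D$, $\Lambda^{(\pi)}_{s,a}=D^{(\pi)}_s\pi_{s,a}$, and $R^{(\pi)}=(1-\gamma)^{-1}\sum_{s,a}\Lambda^{(\pi)}_{s,a}R_{s,a}$. Fairness setup: $S=Z\times\tilde S$ with $Z=\{\mathrm{maj},\mathrm{min}\}$ and $\tilde S$ finite nonempty; agent rewards $\rho\in\mathbb{R}^{S\times A}$. For $z\in Z$, $p_z=\sum_{\tilde s}D_{(z,\tilde s)}$, $D_z$ is the distribution $(D_z)_s=D_s\cdot\mathbb{I}[s=(z,\tilde s)\text{ for some }\tilde s]/p_z$, $D_z^{(\pi)}$ is $\mu^{(\pi)}$ for $\mu=D_z$, $(\Lambda_z^{(\pi)})_{s,a}=(D_z^{(\pi)})_s\pi_{s,a}$,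 and $\rho_z^{(\pi)}=\sum_{s,a}(\Lambda_z^{(\pi)})_{s,a}\rho_{s,a}$. A policy satisfies demographic parity if $\rho_{\mathrm{maj}}^{(\pi)}=\rho_{\mathrm{min}}^{(\pi)}$; $\Pi_{\mathrm{DP}}$ is the set of such policies. Problem (P): maximize $R^{(\pi)}$ over $\pi\in\Pi_{\mathrm{DP}}$. The MDP is separable if there is a transition kernel $\tilde P$ on $\tilde S$ (i.e. $\tilde P_{\tilde s,a,\tilde s'}\ge0$, $\sum_{\tilde s'}\tilde P_{\tilde s,a,\tilde s'}=1$) such that $P_{(z,\tilde s),a,(z',\tilde s')}=\mathbb{I}[z=z']\,\tilde P_{\tilde s,a,\tilde s'}$ for all $z,z'\in Z$, $\tilde s,\tilde s'\in\tilde S$, $a\in A$. *)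

theory Defs
  imports "HOL-Analysis.Analysis"
begin

datatype grp = Maj | Min

lemma UNIV_grp: "(UNIV :: grp set) = {Maj, Min}"
  using grp.exhaust by auto

instance grp :: finite
  by standard (simp add: UNIV_grp)

text \<open>States are pairs (z, s~); actions range over a finite type 'a.
  D : distribution on S, P s a s' : transition kernel, R : rewards, g : discount.\<close>

definition is_dist :: "('s::finite \<Rightarrow> real) \<Rightarrow> bool" where
  "is_dist \<mu> \<longleftrightarrow> (\<forall>s. \<mu> s \<ge> 0) \<and> (\<Sum>s\<in>UNIV. \<mu> s) = 1"

definition is_kernel :: "('s::finite \<Rightarrow> 'a::finite \<Rightarrow> 's \<Rightarrow> real) \<Rightarrow> bool" where
  "is_kernel P \<longleftrightarrow> (\<forall>s a s'. P s a s' \<ge> 0) \<and> (\<forall>s a. (\<Sum>s'\<in>UNIV. P s a s') = 1)"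

definition is_mdp :: "('s::finite \<Rightarrow> real) \<Rightarrow> ('s \<Rightarrow> 'a::finite \<Rightarrow> 's \<Rightarrow> real) \<Rightarrow> real \<Rightarrow> bool" where
  "is_mdp D P g \<longleftrightarrow> is_dist D \<and> is_kernel P \<and> 0 < g \<and> g < 1"

definition is_policy :: "('s::finite \<Rightarrow> 'a::finite \<Rightarrow> real) \<Rightarrow> bool" where
  "is_policy \<pi> \<longleftrightarrow> (\<forall>s a. \<pi> s a \<ge> 0) \<and> (\<forall>s. (\<Sum>a\<in>UNIV. \<pi> s a) = 1)"

definition Ppol :: "('s::finite \<Rightarrow> 'a::finite \<Rightarrow> 's \<Rightarrow> real) \<Rightarrow> ('s \<Rightarrow> 'a \<Rightarrow> real) \<Rightarrow> 's \<Rightarrow> 's \<Rightarrow> real" where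
  "Ppol P \<pi> s s' = (\<Sum>a\<in>UNIV. \<pi> s a * P s a s')"

fun mu_step :: "('s::finite \<Rightarrow> 'a::finite \<Rightarrow> 's \<Rightarrow> real) \<Rightarrow> ('s \<Rightarrow> 'a \<Rightarrow> real) \<Rightarrow> ('s \<Rightarrow> real) \<Rightarrow> nat \<Rightarrow> 's \<Rightarrow> real" where
  "mu_step P \<pi> \<mu> 0 = \<mu>"
| "mu_step P \<pi> \<mu> (Suc t) = (\<lambda>s'. \<Sum>s\<in>UNIV. mu_step P \<pi> \<mu> t s * Ppol P \<pi> s s')"

definition occ :: "('s::finite \<Rightarrow> 'a::finite \<Rightarrow> 's \<Rightarrow> real) \<Rightarrow> real \<Rightarrow> ('s \<Rightarrow> 'a \<Rightarrow> real) \<Rightarrow> ('s \<Rightarrow> real) \<Rightarrow> 's \<Rightarrow> real" where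
  "occ P g \<pi> \<mu> s = (1 - g) * (\<Sum>t. g ^ t * mu_step P \<pi> \<mu> t s)"

definition Rval :: "('s::finite \<Rightarrow> real) \<Rightarrow> ('s \<Rightarrow> 'a::finite \<Rightarrow> 's \<Rightarrow> real) \<Rightarrow> ('s \<Rightarrow> 'a \<Rightarrow> real) \<Rightarrow> real \<Rightarrow> ('s \<Rightarrow> 'a \<Rightarrow> real) \<Rightarrow> real" where
  "Rval D P R g \<pi> = inverse (1 - g) * (\<Sum>s\<in>UNIV. \<Sum>a\<in>UNIV. occ P g \<pi> D s * \<pi> s a * R s a)"

definition pgrp :: "(grp \<times> 't::finite \<Rightarrow> real) \<Rightarrow> grp \<Rightarrow> real" where
  "pgrp D z = (\<Sum>t\<in>UNIV. D (z, t))"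

definition Dgrp :: "(grp \<times> 't::finite \<Rightarrow> real) \<Rightarrow> grp \<Rightarrow> grp \<times> 't \<Rightarrow> real" where
  "Dgrp D z s = D s * (if fst s = z then 1 else 0) / pgrp D z"

definition rho_grp :: "(grp \<times> 't::finite \<Rightarrow> real) \<Rightarrow> (grp \<times> 't \<Rightarrow> 'a::finite \<Rightarrow> grp \<times> 't \<Rightarrow> real)
    \<Rightarrow> (grp \<times> 't \<Rightarrow> 'a \<Rightarrow> real) \<Rightarrow> real \<Rightarrow> (grp \<times> 't \<Rightarrow> 'a \<Rightarrow> real) \<Rightarrow> grp \<Rightarrow> real" where
  "rho_grp D P \<rho> g \<pi> z = (\<Sum>s\<in>UNIV. \<Sum>a\<in>UNIV. occ P g \<pi> (Dgrp D z) s * \<pi> s a * \<rho> s a)"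

definition Pi_DP :: "(grp \<times> 't::finite \<Rightarrow> real) \<Rightarrow> (grp \<times> 't \<Rightarrow> 'a::finite \<Rightarrow> grp \<times> 't \<Rightarrow> real)
    \<Rightarrow> (grp \<times> 't \<Rightarrow> 'a \<Rightarrow> real) \<Rightarrow> real \<Rightarrow> (grp \<times> 't \<Rightarrow> 'a \<Rightarrow> real) set" where
  "Pi_DP D P \<rho> g = {\<pi>. is_policy \<pi> \<and> rho_grp D P \<rho> g \<pi> Maj = rho_grp D P \<rho> g \<pi> Min}"

definition P_optimal :: "(grp \<times> 't::finite \<Rightarrow> real) \<Rightarrow> (grp \<times> 't \<Rightarrow> 'a::finite \<Rightarrow> grp \<times> 't \<Rightarrow> real)
    \<Rightarrow> (grp \<times> 't \<Rightarrow> 'a \<Rightarrow> real) \<Rightarrow> (grp \<times> 't \<Rightarrow> 'a \<Rightarrow> real) \<Rightarrow> real \<Rightarrow> (grp \<times> 't \<Rightarrow> 'a \<Rightarrow> real) \<Rightarrow> bool" where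
  "P_optimal D P R \<rho> g \<pi> \<longleftrightarrow> \<pi> \<in> Pi_DP D P \<rho> g \<and>
     (\<forall>\<pi>'\<in>Pi_DP D P \<rho> g. Rval D P R g \<pi>' \<le> Rval D P R g \<pi>)"

definition separable :: "(grp \<times> 't::finite \<Rightarrow> 'a::finite \<Rightarrow> grp \<times> 't \<Rightarrow> real) \<Rightarrow> bool" where
  "separable P \<longleftrightarrow> (\<exists>Pt :: 't \<Rightarrow> 'a \<Rightarrow> 't \<Rightarrow> real. is_kernel Pt \<and>
     (\<forall>z z' t t' a. P (z, t) a (z', t') = (if z = z' then Pt t a t' else 0)))"

definition lp_obj :: "('s::finite \<Rightarrow> 'a::finite \<Rightarrow> real) \<Rightarrow> real \<Rightarrow> ('s \<Rightarrow> 'a \<Rightarrow> real) \<Rightarrow> real" where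
  "lp_obj R g l = inverse (1 - g) * (\<Sum>s\<in>UNIV. \<Sum>a\<in>UNIV. l s a * R s a)"

definition lp_feasible :: "(grp \<times> 't::finite \<Rightarrow> real) \<Rightarrow> (grp \<times> 't \<Rightarrow> 'a::finite \<Rightarrow> grp \<times> 't \<Rightarrow> real)
    \<Rightarrow> (grp \<times> 't \<Rightarrow> 'a \<Rightarrow> real) \<Rightarrow> real \<Rightarrow> (grp \<times> 't \<Rightarrow> 'a \<Rightarrow> real) \<Rightarrow> real \<Rightarrow> bool" where
  "lp_feasible D P \<rho> g l c \<longleftrightarrow>
     (\<forall>s a. l s a \<ge> 0) \<and>
     (\<forall>s'. (\<Sum>a\<in>UNIV. l s' a) = (1 - g) * D s' + g * (\<Sum>s\<in>UNIV. \<Sum>a\<in>UNIV. l s a * P s a s')) \<and>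
     (\<forall>z. inverse (pgrp D z) * (\<Sum>t\<in>UNIV. \<Sum>a\<in>UNIV. l (z, t) a * \<rho> (z, t) a) = c)"

definition lp_optimal :: "(grp \<times> 't::finite \<Rightarrow> real) \<Rightarrow> (grp \<times> 't \<Rightarrow> 'a::finite \<Rightarrow> grp \<times> 't \<Rightarrow> real)
    \<Rightarrow> (grp \<times> 't \<Rightarrow> 'a \<Rightarrow> real) \<Rightarrow> (grp \<times> 't \<Rightarrow> 'a \<Rightarrow> real) \<Rightarrow> real \<Rightarrow> (grp \<times> 't \<Rightarrow> 'a \<Rightarrow> real) \<Rightarrow> real \<Rightarrow> bool" where
  "lp_optimal D P R \<rho> g l c \<longleftrightarrow> lp_feasible D P \<rho> g l c \<and>
     (\<forall>l' c'. lp_feasible D P \<rho> g l' c' \<longrightarrow> lp_obj R g l' \<le> lp_obj R g l)"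

definition induced_policy :: "('s::finite \<Rightarrow> 'a::finite \<Rightarrow> real) \<Rightarrow> ('s \<Rightarrow> 'a \<Rightarrow> real) \<Rightarrow> bool" where
  "induced_policy l \<pi> \<longleftrightarrow> (\<forall>s.
     (if (\<Sum>a'\<in>UNIV. l s a') > 0
      then (\<forall>a. \<pi> s a = l s a / (\<Sum>a'\<in>UNIV. l s a'))
      else (\<forall>a. \<pi> s a \<ge> 0) \<and> (\<Sum>a\<in>UNIV. \<pi> s a) = 1))"

end

theory Submission
  imports Defs
begin


lemma ppol_nonneg:
  assumes "is_kernel P" "is_policy \<pi>" shows "Ppol P \<pi> s s' \<ge> 0"
  using assms unfolding is_kernel_def is_policy_def Ppol_def
  by (intro sum_nonneg) auto

lemma ppol_sum:
  assumes "is_kernel P" "is_policy \<pi>" shows "(\<Sum>s'\<in>UNIV. Ppol P \<pi> s s') = 1"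
proof -
  have "(\<Sum>s'\<in>UNIV. Ppol P \<pi> s s') = (\<Sum>s'\<in>UNIV. \<Sum>a\<in>UNIV. \<pi> s a * P s a s')"
    unfolding Ppol_def by (rule refl)
  also have "\<dots> = (\<Sum>a\<in>UNIV. \<Sum>s'\<in>UNIV. \<pi> s a * P s a s')"
    by (rule sum.swap)
  also have "\<dots> = (\<Sum>a\<in>UNIV. \<pi> s a * (\<Sum>s'\<in>UNIV. P s a s'))"
    by (simp add: sum_distrib_left)
  also have "\<dots> = 1" using assms unfolding is_kernel_def is_policy_def by simp
  finally show ?thesis .
qed

lemma mu_nonneg:
  assumes "is_kernel P" "is_policy \<pi>" "\<forall>s. \<mu> s \<ge> 0"
  shows "mu_step P \<pi> \<mu> t s \<ge> 0"
  using assms by (induction t arbitrary: s) (auto intro!: sum_nonneg mult_nonneg_nonneg ppol_nonneg)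

lemma mu_sum:
  assumes "is_kernel P" "is_policy \<pi>"
  shows "(\<Sum>s\<in>UNIV. mu_step P \<pi> \<mu> t s) = (\<Sum>s\<in>UNIV. \<mu> s)"
proof (induction t)
  case 0 then show ?case by simp
next
  case (Suc t)
  have "(\<Sum>s\<in>UNIV. mu_step P \<pi> \<mu> (Suc t) s)
      = (\<Sum>s'\<in>UNIV. \<Sum>s\<in>UNIV. mu_step P \<pi> \<mu> t s * Ppol P \<pi> s s')" by simp
  also have "\<dots> = (\<Sum>s\<in>UNIV. \<Sum>s'\<in>UNIV. mu_step P \<pi> \<mu> t s * Ppol P \<pi> s s')"
    by (rule sum.swap)
  also have "\<dots> = (\<Sum>s\<in>UNIV. mu_step P \<pi> \<mu> t s * (\<Sum>s'\<in>UNIV. Ppol P \<pi> s s'))"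
    by (simp add: sum_distrib_left)
  also have "\<dots> = (\<Sum>s\<in>UNIV. mu_step P \<pi> \<mu> t s)" using ppol_sum[OF assms] by simp
  finally show ?case using Suc by simp
qed

lemma mu_le:
  assumes "is_kernel P" "is_policy \<pi>" "\<forall>s. \<mu> s \<ge> 0"
  shows "mu_step P \<pi> \<mu> t s \<le> (\<Sum>s\<in>UNIV. \<mu> s)"
proof -
  have "mu_step P \<pi> \<mu> t s \<le> (\<Sum>s\<in>UNIV. mu_step P \<pi> \<mu> t s)"
    by (rule member_le_sum) (auto intro: mu_nonneg[OF assms])
  then show ?thesis using mu_sum[OF assms(1,2)] by simp
qed

lemma mu_summable:
  assumes "is_kernel P" "is_policy \<pi>" "\<forall>s. \<mu> s \<ge> 0" "0 \<le> g" "g < 1"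
  shows "summable (\<lambda>t. g ^ t * mu_step P \<pi> \<mu> t s)"
proof (rule summable_comparison_test')
  show "summable (\<lambda>t. g ^ t * (\<Sum>s\<in>UNIV. \<mu> s))"
    using assms by (intro summable_mult2 summable_geometric) auto
  fix t
  show "norm (g ^ t * mu_step P \<pi> \<mu> t s) \<le> g ^ t * (\<Sum>s\<in>UNIV. \<mu> s)"
    using mu_nonneg[OF assms(1-3)] mu_le[OF assms(1-3)] assms(4)
    by (simp add: abs_mult mult_left_mono)
qed

lemma occ_nonneg:
  assumes "is_kernel P" "is_policy \<pi>" "\<forall>s. \<mu> s \<ge> 0" "0 \<le> g" "g < 1"
  shows "occ P g \<pi> \<mu> s \<ge> 0"
  unfolding occ_def using assms mu_nonneg[OF assms(1-3)]
  by (intro mult_nonneg_nonneg suminf_nonneg mu_summable) auto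

lemma occ_flow:
  assumes "is_kernel P" "is_policy \<pi>" "\<forall>s. \<mu> s \<ge> 0" "0 \<le> g" "g < 1"
  shows "occ P g \<pi> \<mu> s' = (1 - g) * \<mu> s' + g * (\<Sum>s\<in>UNIV. occ P g \<pi> \<mu> s * Ppol P \<pi> s s')"
proof -
  define f where "f t = g ^ t * mu_step P \<pi> \<mu> t s'" for t
  have sf: "summable f" unfolding f_def by (rule mu_summable[OF assms])
  have ss: "summable (\<lambda>t. g ^ t * mu_step P \<pi> \<mu> t s * Ppol P \<pi> s s')" for s
    by (rule summable_mult2[OF mu_summable[OF assms]])
  have "(\<Sum>t. f (Suc t)) = (\<Sum>t. g * (\<Sum>s\<in>UNIV. g ^ t * mu_step P \<pi> \<mu> t s * Ppol P \<pi> s s'))"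
    unfolding f_def by (simp add: sum_distrib_left mult_ac)
  also have "\<dots> = g * (\<Sum>t. (\<Sum>s\<in>UNIV. g ^ t * mu_step P \<pi> \<mu> t s * Ppol P \<pi> s s'))"
    by (rule suminf_mult) (intro summable_sum ss)
  also have "\<dots> = g * (\<Sum>s\<in>UNIV. (\<Sum>t. g ^ t * mu_step P \<pi> \<mu> t s) * Ppol P \<pi> s s')"
    by (simp add: suminf_sum[OF ss] suminf_mult2[OF mu_summable[OF assms]])
  finally have e: "(\<Sum>t. f (Suc t)) = \<dots>" .
  have "suminf f = f 0 + (\<Sum>t. f (Suc t))" using suminf_split_head[OF sf] by simp
  also have "f 0 = \<mu> s'" unfolding f_def by simp
  finally have "suminf f = \<mu> s' + g * (\<Sum>s\<in>UNIV. (\<Sum>t. g ^ t * mu_step P \<pi> \<mu> t s) * Ppol P \<pi> s s')"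
    using e by simp
  then show ?thesis unfolding occ_def f_def
    by (simp add: algebra_simps sum_distrib_left)
qed

lemma flow_unique:
  assumes "is_kernel P" "is_policy \<pi>" "\<forall>s. \<mu> s \<ge> 0" "0 \<le> g" "g < 1"
    and d: "\<forall>s'. d s' = (1 - g) * \<mu> s' + g * (\<Sum>s\<in>UNIV. d s * Ppol P \<pi> s s')"
  shows "d s = occ P g \<pi> \<mu> s"
proof -
  define e where "e s = d s - occ P g \<pi> \<mu> s" for s
  have ee: "e s' = g * (\<Sum>s\<in>UNIV. e s * Ppol P \<pi> s s')" for s'
  proof -
    have "e s' = g * (\<Sum>s\<in>UNIV. d s * Ppol P \<pi> s s') - g * (\<Sum>s\<in>UNIV. occ P g \<pi> \<mu> s * Ppol P \<pi> s s')"
      using d[rule_format, of s'] occ_flow[OF assms(1-5), of s'] unfolding e_def by simp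
    also have "\<dots> = g * (\<Sum>s\<in>UNIV. e s * Ppol P \<pi> s s')"
      unfolding e_def by (simp add: right_diff_distrib[symmetric] sum_subtractf[symmetric] left_diff_distrib)
    finally show ?thesis .
  qed
  have "(\<Sum>s'\<in>UNIV. \<bar>e s'\<bar>) \<le> (\<Sum>s'\<in>UNIV. g * (\<Sum>s\<in>UNIV. \<bar>e s\<bar> * Ppol P \<pi> s s'))"
  proof (rule sum_mono)
    fix s'
    have "\<bar>e s'\<bar> = g * \<bar>\<Sum>s\<in>UNIV. e s * Ppol P \<pi> s s'\<bar>" using ee[of s'] assms(4) by (simp add: abs_mult)
    also have "\<dots> \<le> g * (\<Sum>s\<in>UNIV. \<bar>e s * Ppol P \<pi> s s'\<bar>)"
      using assms(4) by (intro mult_left_mono sum_abs) auto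
    also have "\<dots> = g * (\<Sum>s\<in>UNIV. \<bar>e s\<bar> * Ppol P \<pi> s s')"
      using ppol_nonneg[OF assms(1,2)] by (simp add: abs_mult)
    finally show "\<bar>e s'\<bar> \<le> \<dots>" .
  qed
  also have "\<dots> = g * (\<Sum>s'\<in>UNIV. \<Sum>s\<in>UNIV. \<bar>e s\<bar> * Ppol P \<pi> s s')"
    by (simp add: sum_distrib_left)
  also have "\<dots> = g * (\<Sum>s\<in>UNIV. \<Sum>s'\<in>UNIV. \<bar>e s\<bar> * Ppol P \<pi> s s')"
    by (subst sum.swap) (rule refl)
  also have "\<dots> = g * (\<Sum>s\<in>UNIV. \<bar>e s\<bar> * (\<Sum>s'\<in>UNIV. Ppol P \<pi> s s'))"
    by (simp add: sum_distrib_left)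
  also have "\<dots> = g * (\<Sum>s\<in>UNIV. \<bar>e s\<bar>)" using ppol_sum[OF assms(1,2)] by simp
  finally have le: "(\<Sum>s\<in>UNIV. \<bar>e s\<bar>) \<le> g * (\<Sum>s\<in>UNIV. \<bar>e s\<bar>)" .
  have nn: "(\<Sum>s\<in>UNIV. \<bar>e s\<bar>) \<ge> 0" by (intro sum_nonneg) auto
  have z: "(\<Sum>s\<in>UNIV. \<bar>e s\<bar>) = 0"
  proof (rule ccontr)
    assume "(\<Sum>s\<in>UNIV. \<bar>e s\<bar>) \<noteq> 0"
    then have "0 < (\<Sum>s\<in>UNIV. \<bar>e s\<bar>)" using nn by linarith
    from mult_strict_right_mono[OF assms(5) this] le show False by simp
  qed
  have "\<forall>x\<in>UNIV. \<bar>e x\<bar> = 0" using sum_nonneg_eq_0_iff[of UNIV "\<lambda>x. \<bar>e x\<bar>"] z by (metis abs_ge_zero finite)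
  then have "\<bar>e s\<bar> = 0" by blast
  then show ?thesis unfolding e_def by linarith
qed



lemma feasible_of_policy:
  assumes "is_kernel P" "is_policy \<pi>" "\<forall>s. \<mu> s \<ge> 0" "0 \<le> g" "g < 1"
  defines "l \<equiv> \<lambda>s a. occ P g \<pi> \<mu> s * \<pi> s a"
  shows "\<forall>s a. l s a \<ge> 0"
    and "\<forall>s'. (\<Sum>a\<in>UNIV. l s' a) = (1 - g) * \<mu> s' + g * (\<Sum>s\<in>UNIV. \<Sum>a\<in>UNIV. l s a * P s a s')"
proof -
  show "\<forall>s a. l s a \<ge> 0" unfolding l_def using occ_nonneg[OF assms(1-5)] assms(2)
    unfolding is_policy_def by auto
  have rs: "(\<Sum>a\<in>UNIV. l s a) = occ P g \<pi> \<mu> s" for s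
    unfolding l_def using assms(2) unfolding is_policy_def by (simp add: sum_distrib_left[symmetric])
  have ps: "(\<Sum>a\<in>UNIV. l s a * P s a s') = occ P g \<pi> \<mu> s * Ppol P \<pi> s s'" for s s'
    unfolding l_def Ppol_def by (simp add: sum_distrib_left mult_ac)
  show "\<forall>s'. (\<Sum>a\<in>UNIV. l s' a) = (1 - g) * \<mu> s' + g * (\<Sum>s\<in>UNIV. \<Sum>a\<in>UNIV. l s a * P s a s')"
  proof
    fix s'
    show "(\<Sum>a\<in>UNIV. l s' a) = (1 - g) * \<mu> s' + g * (\<Sum>s\<in>UNIV. \<Sum>a\<in>UNIV. l s a * P s a s')"
      unfolding rs ps by (rule occ_flow[OF assms(1-5)])
  qed
qed

lemma policy_of_feasible:
  assumes "is_kernel P" "\<forall>s. \<mu> s \<ge> 0" "0 \<le> g" "g < 1"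
    and lnn: "\<forall>s a. l s a \<ge> 0"
    and fl: "\<forall>s'. (\<Sum>a\<in>UNIV. l s' a) = (1 - g) * \<mu> s' + g * (\<Sum>s\<in>UNIV. \<Sum>a\<in>UNIV. l s a * P s a s')"
    and ind: "induced_policy l \<pi>"
  shows "is_policy \<pi>" and "\<forall>s a. l s a = occ P g \<pi> \<mu> s * \<pi> s a"
proof -
  define d where "d s = (\<Sum>a\<in>UNIV. l s a)" for s
  have dnn: "d s \<ge> 0" for s unfolding d_def using lnn by (intro sum_nonneg) auto
  have ind': "if d s > 0 then (\<forall>a. \<pi> s a = l s a / d s) else (\<forall>a. \<pi> s a \<ge> 0) \<and> (\<Sum>a\<in>UNIV. \<pi> s a) = 1" for s
    using ind unfolding induced_policy_def d_def by blast
  have i1: "\<pi> s a = l s a / d s" if "d s > 0" for s a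
    using ind'[of s] that by simp
  have i2: "\<pi> s a \<ge> 0 \<and> (\<Sum>a\<in>UNIV. \<pi> s a) = 1" if "\<not> d s > 0" for s a
    using ind'[of s] that by simp
  have pol: "\<pi> s a \<ge> 0 \<and> (\<Sum>a\<in>UNIV. \<pi> s a) = 1" for s a
  proof (cases "d s > 0")
    case True
    have "(\<Sum>a\<in>UNIV. \<pi> s a) = (\<Sum>a\<in>UNIV. l s a) / d s"
      using i1[OF True] by (simp add: sum_divide_distrib)
    also have "\<dots> = 1" using True unfolding d_def by simp
    finally show ?thesis using True lnn i1[OF True, of a] by simp
  next
    case False
    then show ?thesis using i2 by blast
  qed
  show P: "is_policy \<pi>" unfolding is_policy_def using pol by auto
  have ld: "l s a = d s * \<pi> s a" for s a
  proof (cases "d s > 0")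
    case True
    then show ?thesis using i1[OF True, of a] by simp
  next
    case False
    then have "d s = 0" using dnn[of s] by linarith
    then have "\<forall>a\<in>UNIV. l s a = 0" unfolding d_def using sum_nonneg_eq_0_iff[of UNIV "l s"] lnn
      by (metis finite)
    then show ?thesis using \<open>d s = 0\<close> by simp
  qed
  have ps: "(\<Sum>a\<in>UNIV. l s a * P s a s') = d s * Ppol P \<pi> s s'" for s s'
    unfolding Ppol_def by (simp add: ld sum_distrib_left mult_ac)
  have "\<forall>s'. d s' = (1 - g) * \<mu> s' + g * (\<Sum>s\<in>UNIV. d s * Ppol P \<pi> s s')"
  proof
    fix s'
    have "(\<Sum>a\<in>UNIV. l s' a) = (1 - g) * \<mu> s' + g * (\<Sum>s\<in>UNIV. \<Sum>a\<in>UNIV. l s a * P s a s')"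
      using fl by blast
    then show "d s' = (1 - g) * \<mu> s' + g * (\<Sum>s\<in>UNIV. d s * Ppol P \<pi> s s')"
      unfolding ps d_def .
  qed
  from flow_unique[OF assms(1) P assms(2-4) this]
  show "\<forall>s a. l s a = occ P g \<pi> \<mu> s * \<pi> s a" using ld by simp
qed

lemma Ppol_sep:
  assumes "separable P" "z \<noteq> z'"
  shows "Ppol P \<pi> (z, x) (z', y) = 0"
  using assms unfolding separable_def Ppol_def by auto

lemma mu_supp:
  assumes "separable P" "w \<noteq> z"
  shows "mu_step P \<pi> (Dgrp D z) t (w, x) = 0"
  using assms(2)
proof (induction t arbitrary: w x)
  case 0 then show ?case by (simp add: Dgrp_def)
next
  case (Suc t)
  have "mu_step P \<pi> (Dgrp D z) t s * Ppol P \<pi> s (w, x) = 0" for s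
  proof (cases s)
    case (Pair v y)
    show ?thesis
    proof (cases "v = z")
      case True
      then show ?thesis using Ppol_sep[OF assms(1), of v w] Suc.prems Pair by simp
    next
      case False
      then show ?thesis using Suc.IH[of v y] Pair by simp
    qed
  qed
  then have "(\<Sum>s\<in>UNIV. mu_step P \<pi> (Dgrp D z) t s * Ppol P \<pi> s (w, x)) = 0"
    by (intro sum.neutral ballI)
  then show ?case by (simp only: mu_step.simps)
qed

lemma mu_scale:
  assumes "separable P" "pgrp D z > 0"
  shows "mu_step P \<pi> D t (z, x) = pgrp D z * mu_step P \<pi> (Dgrp D z) t (z, x)"
proof (induction t arbitrary: x)
  case 0 then show ?case using assms(2) by (simp add: Dgrp_def)
next
  case (Suc t)
  have "mu_step P \<pi> D t s * Ppol P \<pi> s (z, x) = pgrp D z * (mu_step P \<pi> (Dgrp D z) t s * Ppol P \<pi> s (z, x))" for s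
  proof (cases s)
    case (Pair v y)
    show ?thesis
    proof (cases "v = z")
      case True
      then show ?thesis using Suc.IH[of y] Pair by simp
    next
      case False
      then show ?thesis using Ppol_sep[OF assms(1), of v z] Pair by simp
    qed
  qed
  then have eq: "(\<Sum>s\<in>UNIV. mu_step P \<pi> D t s * Ppol P \<pi> s (z, x)) = (\<Sum>s\<in>UNIV. pgrp D z * (mu_step P \<pi> (Dgrp D z) t s * Ppol P \<pi> s (z, x)))"
    by (intro sum.cong refl)
  show ?case unfolding mu_step.simps sum_distrib_left by (rule eq)
qed

lemma Dgrp_nonneg:
  assumes "\<forall>s. D s \<ge> 0" "pgrp D z > 0"
  shows "\<forall>s. Dgrp D z s \<ge> 0"
  using assms unfolding Dgrp_def by auto

lemma occ_scale:
  assumes "is_kernel P" "is_policy \<pi>" "\<forall>s. D s \<ge> 0" "0 \<le> g" "g < 1"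
    "separable P" "pgrp D z > 0"
  shows "occ P g \<pi> D (z, x) = pgrp D z * occ P g \<pi> (Dgrp D z) (z, x)"
proof -
  have "(\<Sum>t. g ^ t * mu_step P \<pi> D t (z, x)) = (\<Sum>t. pgrp D z * (g ^ t * mu_step P \<pi> (Dgrp D z) t (z, x)))"
    by (simp add: mu_scale[OF assms(6,7)] mult_ac)
  also have "\<dots> = pgrp D z * (\<Sum>t. g ^ t * mu_step P \<pi> (Dgrp D z) t (z, x))"
    by (rule suminf_mult[OF mu_summable[OF assms(1,2) Dgrp_nonneg[OF assms(3,7)] assms(4,5)]])
  finally show ?thesis unfolding occ_def by simp
qed

lemma sum_pair_grp: "(\<Sum>s\<in>(UNIV :: (grp \<times> 't::finite) set). f s) = (\<Sum>w\<in>UNIV. \<Sum>x\<in>UNIV. f (w, x))"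
  by (simp add: sum.cartesian_product' UNIV_Times_UNIV[symmetric] del: UNIV_Times_UNIV)

lemma rho_lemma:
  assumes "is_kernel P" "is_policy \<pi>" "\<forall>s. D s \<ge> 0" "0 \<le> g" "g < 1"
    "separable P" "pgrp D z > 0"
    and l: "\<forall>s a. l s a = occ P g \<pi> D s * \<pi> s a"
  shows "rho_grp D P \<rho> g \<pi> z = inverse (pgrp D z) * (\<Sum>t\<in>UNIV. \<Sum>a\<in>UNIV. l (z, t) a * \<rho> (z, t) a)"
proof -
  define G where "G w = (\<Sum>x\<in>UNIV. \<Sum>a\<in>UNIV. occ P g \<pi> (Dgrp D z) (w, x) * \<pi> (w, x) a * \<rho> (w, x) a)" for w
  have "rho_grp D P \<rho> g \<pi> z = (\<Sum>w\<in>UNIV. G w)"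
    unfolding rho_grp_def G_def by (rule sum_pair_grp)
  also have "\<dots> = G z + (\<Sum>w\<in>UNIV - {z}. G w)" by (simp add: sum.remove)
  also have "(\<Sum>w\<in>UNIV - {z}. G w) = 0"
    unfolding G_def occ_def using mu_supp[OF assms(6)] by (intro sum.neutral) auto
  also have "G z = inverse (pgrp D z) * (\<Sum>t\<in>UNIV. \<Sum>a\<in>UNIV. l (z, t) a * \<rho> (z, t) a)"
  proof -
    have l': "l s a = occ P g \<pi> D s * \<pi> s a" for s a using l by blast
    have "G z = (\<Sum>x\<in>UNIV. \<Sum>a\<in>UNIV. inverse (pgrp D z) * (l (z, x) a * \<rho> (z, x) a))"
      unfolding G_def using assms(7) by (intro sum.cong refl) (simp add: l' occ_scale[OF assms(1-7)])
    also have "\<dots> = inverse (pgrp D z) * (\<Sum>t\<in>UNIV. \<Sum>a\<in>UNIV. l (z, t) a * \<rho> (z, t) a)"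
      by (simp add: sum_distrib_left)
    finally show ?thesis .
  qed
  finally show ?thesis by simp
qed

lemma Rval_lemma:
  assumes l: "\<forall>s a. l s a = occ P g \<pi> D s * \<pi> s a"
  shows "Rval D P R g \<pi> = lp_obj R g l"
  unfolding Rval_def lp_obj_def using l by simp



lemma feasible_total:
  assumes "is_mdp D P g" "lp_feasible D P \<rho> g l c"
  shows "(\<Sum>s\<in>UNIV. \<Sum>a\<in>UNIV. l s a) = 1" and "l s a \<le> 1"
proof -
  have D: "(\<Sum>s\<in>UNIV. D s) = 1" and K: "\<And>s a. (\<Sum>s'\<in>UNIV. P s a s') = 1" and g: "g < 1"
    using assms(1) unfolding is_mdp_def is_dist_def is_kernel_def by auto
  have nn: "\<forall>s a. l s a \<ge> 0"
    and fl: "\<And>s'. (\<Sum>a\<in>UNIV. l s' a) = (1 - g) * D s' + g * (\<Sum>s\<in>UNIV. \<Sum>a\<in>UNIV. l s a * P s a s')"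
    using assms(2) unfolding lp_feasible_def by auto
  define T where "T = (\<Sum>s\<in>UNIV. \<Sum>a\<in>UNIV. l s a)"
  have "T = (\<Sum>s'\<in>UNIV. (1 - g) * D s' + g * (\<Sum>s\<in>UNIV. \<Sum>a\<in>UNIV. l s a * P s a s'))"
    unfolding T_def by (intro sum.cong refl fl)
  also have "\<dots> = (1 - g) * (\<Sum>s'\<in>UNIV. D s') + g * (\<Sum>s'\<in>UNIV. \<Sum>s\<in>UNIV. \<Sum>a\<in>UNIV. l s a * P s a s')"
    by (simp add: sum.distrib sum_distrib_left)
  also have "(\<Sum>s'\<in>UNIV. \<Sum>s\<in>UNIV. \<Sum>a\<in>UNIV. l s a * P s a s') = (\<Sum>s\<in>UNIV. \<Sum>s'\<in>UNIV. \<Sum>a\<in>UNIV. l s a * P s a s')"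
    by (rule sum.swap)
  also have "\<dots> = (\<Sum>s\<in>UNIV. \<Sum>a\<in>UNIV. \<Sum>s'\<in>UNIV. l s a * P s a s')"
    by (intro sum.cong refl sum.swap)
  also have "\<dots> = T" unfolding T_def by (simp add: sum_distrib_left[symmetric] K)
  finally have "T = (1 - g) + g * T" using D by simp
  then have "(1 - g) * T = (1 - g) * 1" by (simp add: algebra_simps)
  then show T1: "(\<Sum>s\<in>UNIV. \<Sum>a\<in>UNIV. l s a) = 1" using g unfolding T_def by simp
  have nn': "\<And>s a. l s a \<ge> 0" using nn by blast
  have "l s a \<le> (\<Sum>a\<in>UNIV. l s a)" by (rule member_le_sum) (simp_all add: nn')
  also have "\<dots> \<le> (\<Sum>s\<in>UNIV. \<Sum>a\<in>UNIV. l s a)" by (rule member_le_sum) (simp_all add: nn' sum_nonneg)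
  finally show "l s a \<le> 1" using T1 by simp
qed

lemma induced_exists: "\<exists>\<pi>. induced_policy (l :: 's::finite \<Rightarrow> 'a::finite \<Rightarrow> real) \<pi>"
proof -
  define \<pi> where "\<pi> s a = (if (\<Sum>a'\<in>UNIV. l s a') > 0 then l s a / (\<Sum>a'\<in>UNIV. l s a') else 1 / real CARD('a))" for s a
  have c: "real CARD('a) > 0" by simp
  have "induced_policy l \<pi>" unfolding induced_policy_def
  proof
    fix s
    show "if (\<Sum>a'\<in>UNIV. l s a') > 0 then (\<forall>a. \<pi> s a = l s a / (\<Sum>a'\<in>UNIV. l s a'))
      else (\<forall>a. \<pi> s a \<ge> 0) \<and> (\<Sum>a\<in>UNIV. \<pi> s a) = 1"
      using c by (auto simp: \<pi>_def)
  qed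
  then show ?thesis by blast
qed



lemma grp_cases2: "z = Maj \<or> z = Min" by (cases z) auto

lemma factA:
  assumes mdp: "is_mdp D P g" and sep: "separable P"
    and pmaj: "pgrp D Maj > 0" and pmin: "pgrp D Min > 0"
    and pi: "\<pi> \<in> Pi_DP D P \<rho> g"
  shows "lp_feasible D P \<rho> g (\<lambda>s a. occ P g \<pi> D s * \<pi> s a) (rho_grp D P \<rho> g \<pi> Maj)"
proof -
  have K: "is_kernel P" and Dn: "\<forall>s. D s \<ge> 0" and g0: "0 \<le> g" and g1: "g < 1"
    using mdp unfolding is_mdp_def is_dist_def by auto
  have pol: "is_policy \<pi>" and eq: "rho_grp D P \<rho> g \<pi> Maj = rho_grp D P \<rho> g \<pi> Min"
    using pi unfolding Pi_DP_def by auto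
  note F = feasible_of_policy[OF K pol Dn g0 g1]
  have p: "pgrp D z > 0" for z using pmaj pmin grp_cases2[of z] by auto
  have "inverse (pgrp D z) * (\<Sum>t\<in>UNIV. \<Sum>a\<in>UNIV. occ P g \<pi> D (z, t) * \<pi> (z, t) a * \<rho> (z, t) a)
        = rho_grp D P \<rho> g \<pi> Maj" for z
  proof -
    have "rho_grp D P \<rho> g \<pi> z = inverse (pgrp D z) * (\<Sum>t\<in>UNIV. \<Sum>a\<in>UNIV. occ P g \<pi> D (z, t) * \<pi> (z, t) a * \<rho> (z, t) a)"
      by (rule rho_lemma[OF K pol Dn g0 g1 sep p]) simp
    moreover have "rho_grp D P \<rho> g \<pi> z = rho_grp D P \<rho> g \<pi> Maj" using eq grp_cases2[of z] by auto
    ultimately show ?thesis by simp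
  qed
  then show ?thesis unfolding lp_feasible_def using F by blast
qed

lemma factB:
  assumes mdp: "is_mdp D P g" and sep: "separable P"
    and pmaj: "pgrp D Maj > 0" and pmin: "pgrp D Min > 0"
    and fe: "lp_feasible D P \<rho> g l c" and ind: "induced_policy l \<pi>"
  shows "\<pi> \<in> Pi_DP D P \<rho> g" and "Rval D P R g \<pi> = lp_obj R g l"
proof -
  have K: "is_kernel P" and Dn: "\<forall>s. D s \<ge> 0" and g0: "0 \<le> g" and g1: "g < 1"
    using mdp unfolding is_mdp_def is_dist_def by auto
  have nn: "\<forall>s a. l s a \<ge> 0"
    and fl: "\<forall>s'. (\<Sum>a\<in>UNIV. l s' a) = (1 - g) * D s' + g * (\<Sum>s\<in>UNIV. \<Sum>a\<in>UNIV. l s a * P s a s')"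
    and gc: "\<forall>z. inverse (pgrp D z) * (\<Sum>t\<in>UNIV. \<Sum>a\<in>UNIV. l (z, t) a * \<rho> (z, t) a) = c"
    using fe unfolding lp_feasible_def by auto
  have pol: "is_policy \<pi>" and L: "\<forall>s a. l s a = occ P g \<pi> D s * \<pi> s a"
    using policy_of_feasible[OF K Dn g0 g1 nn fl ind] by auto
  have p: "pgrp D z > 0" for z using pmaj pmin grp_cases2[of z] by auto
  have "rho_grp D P \<rho> g \<pi> z = c" for z
    using rho_lemma[OF K pol Dn g0 g1 sep p L] gc by simp
  then show "\<pi> \<in> Pi_DP D P \<rho> g" unfolding Pi_DP_def using pol by simp
  show "Rval D P R g \<pi> = lp_obj R g l" by (rule Rval_lemma[OF L])
qed



lemma lp_opt_exists:
  fixes D :: "grp \<times> 't::finite \<Rightarrow> real"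
    and P :: "grp \<times> 't \<Rightarrow> 'a::finite \<Rightarrow> grp \<times> 't \<Rightarrow> real"
    and R \<rho> :: "grp \<times> 't \<Rightarrow> 'a \<Rightarrow> real"
  assumes mdp: "is_mdp D P g" and ex: "\<exists>l c. lp_feasible D P \<rho> g l c"
  shows "\<exists>l c. lp_optimal D P R \<rho> g l c"
proof -
  define lv :: "real^((grp \<times> 't) \<times> 'a) \<Rightarrow> grp \<times> 't \<Rightarrow> 'a \<Rightarrow> real" where
    "lv v = (\<lambda>s a. v $ (s, a))" for v
  define F where "F = {v. \<exists>c. lp_feasible D P \<rho> g (lv v) c}"
  define GG where "GG v z = inverse (pgrp D z) * (\<Sum>t\<in>UNIV. \<Sum>a\<in>UNIV. v $ ((z, t), a) * \<rho> (z, t) a)"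
    for v :: "real^((grp \<times> 't) \<times> 'a)" and z
  have Feq: "F = {v. (\<forall>s. \<forall>a. 0 \<le> v $ (s, a)) \<and>
     (\<forall>s'. (\<Sum>a\<in>UNIV. v $ (s', a)) = (1 - g) * D s' + g * (\<Sum>s\<in>UNIV. \<Sum>a\<in>UNIV. v $ (s, a) * P s a s')) \<and>
     GG v Maj = GG v Min}"
  proof (intro set_eqI iffI)
    fix v assume "v \<in> F"
    then show "v \<in> {v. (\<forall>s. \<forall>a. 0 \<le> v $ (s, a)) \<and>
     (\<forall>s'. (\<Sum>a\<in>UNIV. v $ (s', a)) = (1 - g) * D s' + g * (\<Sum>s\<in>UNIV. \<Sum>a\<in>UNIV. v $ (s, a) * P s a s')) \<and>
     GG v Maj = GG v Min}"
      unfolding F_def lp_feasible_def lv_def GG_def by auto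
  next
    fix v assume v: "v \<in> {v. (\<forall>s. \<forall>a. 0 \<le> v $ (s, a)) \<and>
     (\<forall>s'. (\<Sum>a\<in>UNIV. v $ (s', a)) = (1 - g) * D s' + g * (\<Sum>s\<in>UNIV. \<Sum>a\<in>UNIV. v $ (s, a) * P s a s')) \<and>
     GG v Maj = GG v Min}"
    have hz: "GG v z = GG v Maj" for z using v grp_cases2[of z] by auto
    have "lp_feasible D P \<rho> g (lv v) (GG v Maj)" unfolding lp_feasible_def
    proof (intro conjI)
      show "\<forall>s a. 0 \<le> lv v s a" using v unfolding lv_def by simp
      show "\<forall>s'. (\<Sum>a\<in>UNIV. lv v s' a) = (1 - g) * D s' + g * (\<Sum>s\<in>UNIV. \<Sum>a\<in>UNIV. lv v s a * P s a s')"
        using v unfolding lv_def by simp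
      show "\<forall>z. inverse (pgrp D z) * (\<Sum>t\<in>UNIV. \<Sum>a\<in>UNIV. lv v (z, t) a * \<rho> (z, t) a) = GG v Maj"
        using hz unfolding lv_def GG_def by simp
    qed
    then show "v \<in> F" unfolding F_def by blast
  qed
  have closed: "closed F" unfolding Feq GG_def
    by (intro closed_Collect_conj closed_Collect_all closed_Collect_le closed_Collect_eq continuous_intros)
  have sub: "F \<subseteq> cbox 0 1"
  proof
    fix v assume "v \<in> F"
    then obtain c where fe: "lp_feasible D P \<rho> g (lv v) c" unfolding F_def by blast
    have "0 \<le> v $ i \<and> v $ i \<le> 1" for i
    proof (cases i)
      case (Pair s a)
      have "0 \<le> lv v s a" using fe unfolding lp_feasible_def by blast
      then show ?thesis using feasible_total(2)[OF mdp fe, of s a] Pair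
        unfolding lv_def by auto
    qed
    then show "v \<in> cbox 0 1" by (simp add: mem_box_cart)
  qed
  have comp: "compact F"
  proof -
    have "compact (cbox 0 1 \<inter> F)" by (rule compact_Int_closed[OF compact_cbox closed])
    moreover have "cbox 0 1 \<inter> F = F" using sub by blast
    ultimately show ?thesis by simp
  qed
  from ex obtain l0 c0 where fe0: "lp_feasible D P \<rho> g l0 c0" by blast
  define v0 :: "real^((grp \<times> 't) \<times> 'a)" where "v0 = (\<chi> i. l0 (fst i) (snd i))"
  have lvv: "lv (\<chi> i. l (fst i) (snd i)) = l" for l :: "grp \<times> 't \<Rightarrow> 'a \<Rightarrow> real"
    unfolding lv_def by simp
  have "v0 \<in> F" unfolding F_def v0_def mem_Collect_eq lvv using fe0 by blast
  then have ne: "F \<noteq> {}" by blast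
  have cont: "continuous_on F (\<lambda>v. lp_obj R g (lv v))"
    unfolding lp_obj_def lv_def by (intro continuous_intros)
  obtain vs where vs: "vs \<in> F" and mx: "\<forall>y\<in>F. lp_obj R g (lv y) \<le> lp_obj R g (lv vs)"
    using continuous_attains_sup[OF comp ne cont] by blast
  from vs obtain cs where fes: "lp_feasible D P \<rho> g (lv vs) cs" unfolding F_def by blast
  have "lp_optimal D P R \<rho> g (lv vs) cs" unfolding lp_optimal_def
  proof (intro conjI allI impI)
    show "lp_feasible D P \<rho> g (lv vs) cs" by (rule fes)
    fix l' c' assume "lp_feasible D P \<rho> g l' c'"
    then have "(\<chi> i. l' (fst i) (snd i)) \<in> F" unfolding F_def mem_Collect_eq lvv by blast
    from mx[rule_format, OF this] show "lp_obj R g l' \<le> lp_obj R g (lv vs)" unfolding lvv .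
  qed
  then show ?thesis by blast
qed


theorem theorem3:
  fixes D :: "grp \<times> 't::finite \<Rightarrow> real"
    and P :: "grp \<times> 't \<Rightarrow> 'a::finite \<Rightarrow> grp \<times> 't \<Rightarrow> real"
    and R \<rho> :: "grp \<times> 't \<Rightarrow> 'a \<Rightarrow> real"
    and g :: real
  assumes mdp: "is_mdp D P g"
    and sep: "separable P"
    and pmaj: "pgrp D Maj > 0"
    and pmin: "pgrp D Min > 0"
  shows "((\<exists>l c. lp_feasible D P \<rho> g l c) \<longleftrightarrow> Pi_DP D P \<rho> g \<noteq> {}) \<and>
         (Pi_DP D P \<rho> g \<noteq> {} \<longrightarrow>
            (\<exists>l c. lp_optimal D P R \<rho> g l c) \<and>
            (\<forall>l c \<pi>. lp_optimal D P R \<rho> g l c \<longrightarrow> induced_policy l \<pi> \<longrightarrow>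
                P_optimal D P R \<rho> g \<pi> \<and> Rval D P R g \<pi> = lp_obj R g l))"
proof -
  have K: "is_kernel P" and Dn: "\<forall>s. D s \<ge> 0" and g0: "0 \<le> g" and g1: "g < 1"
    using mdp unfolding is_mdp_def is_dist_def by auto
  have eq1: "(\<exists>l c. lp_feasible D P \<rho> g l c) \<longleftrightarrow> Pi_DP D P \<rho> g \<noteq> {}"
  proof
    assume "\<exists>l c. lp_feasible D P \<rho> g l c"
    then obtain l c where fe: "lp_feasible D P \<rho> g l c" by blast
    obtain \<pi> where "induced_policy l \<pi>" using induced_exists by blast
    from factB(1)[OF mdp sep pmaj pmin fe this] show "Pi_DP D P \<rho> g \<noteq> {}" by blast
  next
    assume "Pi_DP D P \<rho> g \<noteq> {}"
    then obtain \<pi> where "\<pi> \<in> Pi_DP D P \<rho> g" by blast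
    from factA[OF mdp sep pmaj pmin this] show "\<exists>l c. lp_feasible D P \<rho> g l c" by blast
  qed
  have part2: "(\<exists>l c. lp_optimal D P R \<rho> g l c) \<and>
            (\<forall>l c \<pi>. lp_optimal D P R \<rho> g l c \<longrightarrow> induced_policy l \<pi> \<longrightarrow>
                P_optimal D P R \<rho> g \<pi> \<and> Rval D P R g \<pi> = lp_obj R g l)"
    if ne: "Pi_DP D P \<rho> g \<noteq> {}"
  proof (intro conjI allI impI)
    show "\<exists>l c. lp_optimal D P R \<rho> g l c"
      using lp_opt_exists[OF mdp] eq1 ne by blast
    fix l c \<pi>
    assume opt: "lp_optimal D P R \<rho> g l c" and ind: "induced_policy l \<pi>"
    have fe: "lp_feasible D P \<rho> g l c" and mx: "\<And>l' c'. lp_feasible D P \<rho> g l' c' \<Longrightarrow> lp_obj R g l' \<le> lp_obj R g l"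
      using opt unfolding lp_optimal_def by auto
    have inP: "\<pi> \<in> Pi_DP D P \<rho> g" and rv: "Rval D P R g \<pi> = lp_obj R g l"
      using factB[OF mdp sep pmaj pmin fe ind] by auto
    show "Rval D P R g \<pi> = lp_obj R g l" by (rule rv)
    show "P_optimal D P R \<rho> g \<pi>" unfolding P_optimal_def
    proof (intro conjI ballI)
      show "\<pi> \<in> Pi_DP D P \<rho> g" by (rule inP)
      fix \<pi>' assume p': "\<pi>' \<in> Pi_DP D P \<rho> g"
      have "Rval D P R g \<pi>' = lp_obj R g (\<lambda>s a. occ P g \<pi>' D s * \<pi>' s a)"
        by (rule Rval_lemma) simp
      also have "\<dots> \<le> lp_obj R g l" by (rule mx[OF factA[OF mdp sep pmaj pmin p']])
      finally show "Rval D P R g \<pi>' \<le> Rval D P R g \<pi>" using rv by simp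
    qed
  qed
  show ?thesis using eq1 part2 by blast
qed

end
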